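(* Let $f_u,f_v,g_u,g_v\in\mathbb{R}$, $D_u,D_v>0$, $\beta>0$ and $\ell_0:=\ell(u_0)\in\mathbb{R}$, and set $$J_0=\begin{pmatrix} f_u & f_v\\ g_u & g_v\end{pmatrix},\qquad L=\begin{pmatrix} D_u & -\beta\ell_0\\ 0 & D_v\end{pmatrix},\qquad J_k=J_0-k^2L\quad (k\ge 0).$$ Assume $J_0$ is stable, i.e. $f_u+g_v<0$ and $f_ug_v-f_vg_u>0$. Define $A=D_ug_v+D_vf_u$, $A_1=\sqrt{D_uD_v}\ge 0$, $A_2=\sqrt{\det(J_0)}>0$ and $A_3=|f_v-g_u|\ge 0$. Then $J_k$ is reactive (for some wavenumber $k\neq 0$) if any one of the following conditions holds: (Case 1) $|\beta\,\ell_0|>2A_1$; (Case 2) $|\beta\,\ell_0|\le 2A_1$ and $J_0$ is reactive (equivalently $A_3>2A_2$); (Case 3) $|\beta\,\ell_0|\le 2A_1$, $J_0$ is not reactive (equivalently $A_3\le 2A_2$), and $$\sqrt{A_1^2-\frac{\beta^2\ell_0^2}{4}}\,\sqrt{4A_2^2-A_3^2}-\frac{(f_v+g_u)\beta\,\ell_0}{2}<A<0.$$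
   Context: This concerns the reaction–diffusion–chemotaxis system $\partial_t u=D_u\Delta u-\beta\nabla\cdot(\ell(u)\nabla v)+f(u,v)$, $\partial_t v=D_v\Delta v+g(u,v)$, linearized at a spatially homogeneous equilibrium $(u_0,v_0)$ (with $f(u_0,v_0)=g(u_0,v_0)=0$); $J_0$ is the Jacobian of $(f,g)$ at $(u_0,v_0)$ with entries $f_u=\partial f/\partial u(u_0,v_0)$ etc., and after Fourier transform in space the linearized dynamics of a mode with wavenumber $k=\|\boldsymbol\omega\|$ is $\widetilde{\mathbf w}_t=J_k\widetilde{\mathbf w}$. A real square matrix $M$ is reactive if $\max\lambda\big((M+M^T)/2\big)>0$, i.e. the largest eigenvalue of its Hermitian part is positive; "$J_k$ is reactive" means this holds for $J_k$ for at least one $k\neq0$. *)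

theory Defs
  imports "HOL-Analysis.Analysis"
begin

definition mat2 :: "real \<Rightarrow> real \<Rightarrow> real \<Rightarrow> real \<Rightarrow> real^2^2" where
  "mat2 a b c d = (\<chi> i j. if i = 1 then (if j = 1 then a else b) else (if j = 1 then c else d))"

definition herm_part :: "real^'n^'n \<Rightarrow> real^'n^'n" where
  "herm_part M = (1/2) *\<^sub>R (M + transpose M)"

definition real_eigenvalues :: "real^'n^'n \<Rightarrow> real set" where
  "real_eigenvalues M = {\<mu>. \<exists>v. v \<noteq> 0 \<and> M *v v = \<mu> *\<^sub>R v}"

definition reactive :: "real^'n^'n \<Rightarrow> bool" where
  "reactive M \<longleftrightarrow> Max (real_eigenvalues (herm_part M)) > 0"

definition J0 :: "real \<Rightarrow> real \<Rightarrow> real \<Rightarrow> real \<Rightarrow> real^2^2" where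
  "J0 fu fv gu gv = mat2 fu fv gu gv"

definition Lmat :: "real \<Rightarrow> real \<Rightarrow> real \<Rightarrow> real \<Rightarrow> real^2^2" where
  "Lmat Du Dv \<beta> l0 = mat2 Du (- \<beta> * l0) 0 Dv"

definition Jk :: "real \<Rightarrow> real \<Rightarrow> real \<Rightarrow> real \<Rightarrow> real \<Rightarrow> real \<Rightarrow> real \<Rightarrow> real \<Rightarrow> real \<Rightarrow> real^2^2" where
  "Jk fu fv gu gv Du Dv \<beta> l0 k = J0 fu fv gu gv - (k^2) *\<^sub>R Lmat Du Dv \<beta> l0"

end

theory Submission imports Defs begin

lemma mat2_nth: "mat2 a b c d $ 1 $ 1 = a" "mat2 a b c d $ 1 $ 2 = b"
  "mat2 a b c d $ 2 $ 1 = c" "mat2 a b c d $ 2 $ 2 = d"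
  by (simp_all add: mat2_def)

lemma mat2_eq: "(M::real^2^2) = mat2 (M$1$1) (M$1$2) (M$2$1) (M$2$2)"
  by (simp add: vec_eq_iff forall_2 mat2_nth)

lemma herm_mat2: "herm_part (mat2 a b c d) = mat2 a ((b+c)/2) ((b+c)/2) d"
  by (simp add: herm_part_def vec_eq_iff forall_2 mat2_nth transpose_def) (simp add: field_simps)?

lemma eig_sym: "real_eigenvalues (mat2 p q q r) = {\<mu>. (p-\<mu>)*(r-\<mu>) = q^2}"
proof (rule set_eqI, rule iffI)
  fix \<mu> assume "\<mu> \<in> real_eigenvalues (mat2 p q q r)"
  then obtain v :: "real^2" where v: "v \<noteq> 0" "mat2 p q q r *v v = \<mu> *\<^sub>R v"
    unfolding real_eigenvalues_def by blast
  have e1: "(p-\<mu>) * v$1 + q * v$2 = 0" and e2: "q * v$1 + (r-\<mu>) * v$2 = 0"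
    using v(2) by (auto simp: vec_eq_iff forall_2 matrix_vector_mult_def sum_2 mat2_nth algebra_simps)
  have nz: "v$1 \<noteq> 0 \<or> v$2 \<noteq> 0" using v(1) by (auto simp: vec_eq_iff forall_2)
  have "((p-\<mu>)*(r-\<mu>) - q^2) * v$1 = 0"
  proof -
    have "((p-\<mu>)*(r-\<mu>) - q^2) * v$1 = (r-\<mu>) * ((p-\<mu>) * v$1 + q * v$2) - q * (q * v$1 + (r-\<mu>) * v$2)"
      by (simp add: algebra_simps power2_eq_square)
    thus ?thesis using e1 e2 by simp
  qed
  moreover have "((p-\<mu>)*(r-\<mu>) - q^2) * v$2 = 0"
  proof -
    have "((p-\<mu>)*(r-\<mu>) - q^2) * v$2 = (p-\<mu>) * (q * v$1 + (r-\<mu>) * v$2) - q * ((p-\<mu>) * v$1 + q * v$2)"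
      by (simp add: algebra_simps power2_eq_square)
    thus ?thesis using e1 e2 by simp
  qed
  ultimately show "\<mu> \<in> {\<mu>. (p-\<mu>)*(r-\<mu>) = q^2}" using nz by auto
next
  fix \<mu> assume "\<mu> \<in> {\<mu>. (p-\<mu>)*(r-\<mu>) = q^2}"
  hence h: "(p-\<mu>)*(r-\<mu>) = q^2" by simp
  define v :: "real^2" where "v = (if q = 0 \<and> \<mu> = p then vector [1, 0]
     else if q \<noteq> 0 \<or> \<mu> \<noteq> p then vector [q, \<mu> - p] else 0)"
  show "\<mu> \<in> real_eigenvalues (mat2 p q q r)"
    unfolding real_eigenvalues_def
  proof (intro CollectI exI[of _ v] conjI)
    show "v \<noteq> 0" by (auto simp: v_def vec_eq_iff forall_2)
    show "mat2 p q q r *v v = \<mu> *\<^sub>R v"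
      using h by (auto simp: v_def vec_eq_iff forall_2 matrix_vector_mult_def sum_2 mat2_nth algebra_simps power2_eq_square)
  qed
qed

lemma Max_sym_pos:
  fixes a d q :: real
  shows "Max {\<mu>. (a-\<mu>)*(d-\<mu>) = q^2} > 0 \<longleftrightarrow> (a+d > 0 \<or> a*d - q^2 < 0)"
proof -
  define D where "D = (a-d)^2 + 4*q^2"
  define s where "s = sqrt D"
  have D0: "D \<ge> 0" unfolding D_def by (intro add_nonneg_nonneg) auto
  have s2: "s^2 = D" unfolding s_def using D0 by (simp del: real_sqrt_ge_0_iff)
  have s0: "s \<ge> 0" unfolding s_def using D0 by simp
  have eqs: "{\<mu>. (a-\<mu>)*(d-\<mu>) = q^2} = {(a+d+s)/2, (a+d-s)/2}"
  proof (rule set_eqI)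
    fix \<mu>
    have "(a-\<mu>)*(d-\<mu>) - q^2 = (\<mu> - (a+d+s)/2) * (\<mu> - (a+d-s)/2)"
      using s2 unfolding D_def by (simp add: algebra_simps power2_eq_square field_simps)
    hence "(a-\<mu>)*(d-\<mu>) = q^2 \<longleftrightarrow> (\<mu> - (a+d+s)/2) * (\<mu> - (a+d-s)/2) = 0" by linarith
    also have "\<dots> \<longleftrightarrow> \<mu> = (a+d+s)/2 \<or> \<mu> = (a+d-s)/2" by (simp only: mult_eq_0_iff right_minus_eq)
    finally show "\<mu> \<in> {\<mu>. (a-\<mu>)*(d-\<mu>) = q^2} \<longleftrightarrow> \<mu> \<in> {(a+d+s)/2, (a+d-s)/2}"
      by (simp only: mem_Collect_eq insert_iff empty_iff simp_thms)
  qed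
  have mx: "Max {(a+d+s)/2, (a+d-s)/2} = (a+d+s)/2" using s0 by (simp add: max_def)
  have DD: "D = (a+d)^2 - 4*(a*d - q^2)" unfolding D_def by (simp add: algebra_simps power2_eq_square)
  show ?thesis
  proof
    assume "Max {\<mu>. (a-\<mu>)*(d-\<mu>) = q^2} > 0"
    hence lp: "a+d+s > 0" using eqs mx by simp
    show "a+d > 0 \<or> a*d - q^2 < 0"
    proof (rule ccontr)
      assume "\<not> (a+d > 0 \<or> a*d - q^2 < 0)"
      hence h: "a+d \<le> 0" "a*d - q^2 \<ge> 0" by auto
      have "D \<le> (a+d)^2" using DD h by simp
      hence "s \<le> sqrt ((a+d)^2)" unfolding s_def using real_sqrt_le_mono by blast
      hence "s \<le> -(a+d)" using h by simp
      thus False using lp by simp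
    qed
  next
    assume h: "a+d > 0 \<or> a*d - q^2 < 0"
    have "a+d+s > 0"
    proof (cases "a+d > 0")
      case True thus ?thesis using s0 by simp
    next
      case False
      hence "a*d - q^2 < 0" using h by simp
      hence "(a+d)^2 < D" using DD by simp
      hence "\<bar>a+d\<bar> < s" unfolding s_def
        by (metis real_sqrt_abs real_sqrt_less_mono)
      thus ?thesis by simp
    qed
    thus "Max {\<mu>. (a-\<mu>)*(d-\<mu>) = q^2} > 0" using eqs mx by simp
  qed
qed

lemma reactive_mat2:
  "reactive (mat2 a b c d) \<longleftrightarrow> (a+d > 0 \<or> a*d - ((b+c)/2)^2 < 0)"
  unfolding reactive_def herm_mat2 eig_sym by (rule Max_sym_pos)

lemma Jk_mat2: "Jk fu fv gu gv Du Dv \<beta> l0 k = mat2 (fu - k^2*Du) (fv + k^2*\<beta>*l0) gu (gv - k^2*Dv)"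
  by (simp add: Jk_def J0_def Lmat_def vec_eq_iff forall_2 mat2_nth)

lemma exists_k:
  assumes "s > 0" and "(fu - s*Du)*(gv - s*Dv) - ((fv + s*\<beta>*l0 + gu)/2)^2 < 0"
  shows "\<exists>k::real. k \<noteq> 0 \<and> reactive (Jk fu fv gu gv Du Dv \<beta> l0 k)"
proof (intro exI conjI)
  show "sqrt s \<noteq> 0" using assms(1) by simp
  have "(sqrt s)^2 = s" using assms(1) by simp
  thus "reactive (Jk fu fv gu gv Du Dv \<beta> l0 (sqrt s))"
    unfolding Jk_mat2 reactive_mat2 using assms(2) by (simp add: algebra_simps)
qed

theorem proposition2:
  fixes fu fv gu gv Du Dv \<beta> l0 :: real
  assumes "Du > 0" and "Dv > 0" and "\<beta> > 0"
    and "fu + gv < 0" and "fu * gv - fv * gu > 0"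
  defines "A \<equiv> Du * gv + Dv * fu"
    and "A1 \<equiv> sqrt (Du * Dv)"
    and "A2 \<equiv> sqrt (det (J0 fu fv gu gv))"
    and "A3 \<equiv> \<bar>fv - gu\<bar>"
  assumes cases:
    "\<bar>\<beta> * l0\<bar> > 2 * A1
     \<or> (\<bar>\<beta> * l0\<bar> \<le> 2 * A1 \<and> reactive (J0 fu fv gu gv))
     \<or> (\<bar>\<beta> * l0\<bar> \<le> 2 * A1 \<and> \<not> reactive (J0 fu fv gu gv) \<and>
        sqrt (A1^2 - \<beta>^2 * l0^2 / 4) * sqrt (4 * A2^2 - A3^2) - (fv + gu) * \<beta> * l0 / 2 < A
        \<and> A < 0)"
  shows "\<exists>k::real. k \<noteq> 0 \<and> reactive (Jk fu fv gu gv Du Dv \<beta> l0 k)"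
proof -
  define a2 where "a2 = Du*Dv - \<beta>^2*l0^2/4"
  define b where "b = A + (fv+gu)*\<beta>*l0/2"
  define c0 where "c0 = fu*gv - (fv+gu)^2/4"
  define P where "P s = (fu - s*Du)*(gv - s*Dv) - ((fv + s*\<beta>*l0 + gu)/2)^2" for s
  have Peq: "P x = a2 * x^2 - b * x + c0" for x
    unfolding P_def a2_def b_def c0_def A_def by (simp add: algebra_simps power2_eq_square field_simps)
  have suff: "\<exists>s>0. P s < 0 \<Longrightarrow> ?thesis" unfolding P_def using exists_k by blast
  have A1sq: "A1^2 = Du*Dv" unfolding A1_def using assms(1,2) by simp
  have detJ0: "det (J0 fu fv gu gv) = fu*gv - fv*gu" by (simp add: J0_def det_2 mat2_nth)
  have A2sq: "A2^2 = fu*gv - fv*gu" unfolding A2_def detJ0 using assms(5) by simp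
  have A3sq: "A3^2 = (fv-gu)^2" unfolding A3_def by simp
  have c0eq: "4*A2^2 - A3^2 = 4*c0" unfolding A2sq A3sq c0_def by (simp add: algebra_simps power2_eq_square)
  have J0r: "reactive (J0 fu fv gu gv) \<longleftrightarrow> c0 < 0"
    unfolding J0_def reactive_mat2 c0_def using assms(4) by (simp add: add.commute power_divide)
  show ?thesis
  proof (rule suff)
    consider (c1) "\<bar>\<beta> * l0\<bar> > 2 * A1" | (c2) "reactive (J0 fu fv gu gv)"
      | (c3) "\<bar>\<beta> * l0\<bar> \<le> 2 * A1" "\<not> reactive (J0 fu fv gu gv)"
        "sqrt (A1^2 - \<beta>^2 * l0^2 / 4) * sqrt (4 * A2^2 - A3^2) - (fv + gu) * \<beta> * l0 / 2 < A"
      using cases by blast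
    then show "\<exists>s>0. P s < 0"
    proof cases
      case c1
      have "(\<beta>*l0)^2 > (2*A1)^2"
      proof -
        have "0 \<le> 2*A1" unfolding A1_def using assms(1,2) by simp
        hence "(2*A1)^2 < \<bar>\<beta>*l0\<bar>^2" using c1 by (intro power_strict_mono) auto
        thus ?thesis by simp
      qed
      hence a2n: "a2 < 0" unfolding a2_def using A1sq by (simp add: power_mult_distrib algebra_simps)
      define s where "s = max 1 ((\<bar>b\<bar> + \<bar>c0\<bar> + 1) / (-a2))"
      have s1: "s \<ge> 1" unfolding s_def by simp
      have "(-a2) * s \<ge> \<bar>b\<bar> + \<bar>c0\<bar> + 1"
      proof -
        have h: "(\<bar>b\<bar> + \<bar>c0\<bar> + 1) / (-a2) \<le> s" unfolding s_def by (rule max.cobounded2)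
        have "0 < -a2" using a2n by simp
        from h have "\<bar>b\<bar> + \<bar>c0\<bar> + 1 \<le> s * (-a2)" by (simp only: pos_divide_le_eq[OF \<open>0 < -a2\<close>])
        thus ?thesis by (simp add: mult.commute)
      qed
      hence "s * (\<bar>b\<bar> + \<bar>c0\<bar> + 1) \<le> s * ((-a2) * s)"
        using s1 by (intro mult_left_mono) auto
      hence "a2 * s^2 \<le> - s * (\<bar>b\<bar> + \<bar>c0\<bar> + 1)"
        by (simp add: power2_eq_square algebra_simps)
      moreover have "- b * s \<le> \<bar>b\<bar> * s" using s1 by (intro mult_right_mono) auto
      moreover have "c0 \<le> \<bar>c0\<bar> * s"
      proof -
        have "\<bar>c0\<bar> * 1 \<le> \<bar>c0\<bar> * s" using s1 by (intro mult_left_mono) auto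
        thus ?thesis by simp
      qed
      ultimately have "P s < 0" unfolding Peq using s1 by (simp add: algebra_simps)
      moreover have "s > 0" using s1 by simp
      ultimately show ?thesis by blast
    next
      case c2
      hence c0n: "c0 < 0" using J0r by simp
      define s where "s = min 1 (-c0 / (2*(\<bar>a2\<bar> + \<bar>b\<bar> + 1)))"
      have dp: "0 < 2*(\<bar>a2\<bar> + \<bar>b\<bar> + 1)" by (simp add: add_pos_nonneg add_nonneg_pos)
      have "0 < -c0 / (2*(\<bar>a2\<bar> + \<bar>b\<bar> + 1))" using c0n dp by (intro divide_pos_pos) auto
      hence s0: "s > 0" unfolding s_def by simp
      have s1: "s \<le> 1" unfolding s_def by simp
      have "s * (2*(\<bar>a2\<bar> + \<bar>b\<bar> + 1)) \<le> -c0"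
      proof -
        have "s \<le> -c0 / (2*(\<bar>a2\<bar> + \<bar>b\<bar> + 1))" unfolding s_def by (rule min.cobounded2)
        thus ?thesis by (simp only: pos_le_divide_eq[OF dp])
      qed
      moreover have "a2 * s^2 \<le> \<bar>a2\<bar> * s"
      proof -
        have "a2 * s^2 \<le> \<bar>a2\<bar> * s^2" using s0 by (simp add: mult_right_mono)
        also have "\<dots> \<le> \<bar>a2\<bar> * s" using s0 s1 by (intro mult_left_mono) (auto simp: power2_eq_square mult_le_cancel_left1)
        finally show ?thesis .
      qed
      moreover have "- b * s \<le> \<bar>b\<bar> * s" using s0 by (intro mult_right_mono) auto
      ultimately have "P s < 0" unfolding Peq using s0 c0n by (simp add: algebra_simps)
      thus ?thesis using s0 by blast
    next
      case c3
      have c0p: "c0 \<ge> 0" using c3(2) J0r by simp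
      have a2p: "a2 \<ge> 0"
      proof -
        have "\<bar>\<beta>*l0\<bar>^2 \<le> (2*A1)^2" using c3(1) by (intro power_mono) auto
        thus ?thesis unfolding a2_def using A1sq by (simp add: power_mult_distrib algebra_simps)
      qed
      have "sqrt (A1^2 - \<beta>^2 * l0^2 / 4) = sqrt a2" unfolding a2_def A1sq ..
      moreover have "sqrt (4 * A2^2 - A3^2) = 2 * sqrt c0" unfolding c0eq by (simp add: real_sqrt_mult)
      ultimately have key: "2 * sqrt a2 * sqrt c0 < b" using c3(3) unfolding b_def by simp
      have "0 \<le> 2 * sqrt a2 * sqrt c0" using a2p c0p by simp
      hence bp: "b > 0" using key by linarith
      show ?thesis
      proof (cases "a2 = 0")
        case True
        define s where "s = (c0 + 1) / b"
        have s0: "s > 0" unfolding s_def using bp c0p by simp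
        have bs: "b * s = c0 + 1" unfolding s_def using bp by simp
        have "P s = c0 - b * s" unfolding Peq True by simp
        also have "\<dots> = -1" using bs by simp
        finally have "P s < 0" by simp
        thus ?thesis using s0 by blast
      next
        case False
        hence a2pos: "a2 > 0" using a2p by simp
        define s where "s = b / (2*a2)"
        have s0: "s > 0" unfolding s_def using bp a2pos by simp
        have "(2 * sqrt a2 * sqrt c0)^2 < b^2" using key bp a2p c0p by (intro power_strict_mono) auto
        hence "4*a2*c0 < b^2" using a2p c0p by (simp add: power_mult_distrib)
        moreover have "P s = (4*a2*c0 - b^2) / (4*a2)" unfolding Peq s_def using a2pos
          by (simp add: field_simps power2_eq_square)
        ultimately have "P s < 0" using a2pos by (simp add: divide_neg_pos)
        thus ?thesis using s0 by blast
      qed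
    qed
  qed
qed

end
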